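(* Let $e$ be an edge of $\mathcal{G}$ such that $v=s(e)$ satisfies $0<|s^{-1}(v)|<\infty$. If $\pi(p_A)(h)=0$ for each $A\in\mathcal{G}^0$ and each $h\in B\setminus B_A$, then $\pi(s_e^* )(h)=0$ for each $h\in B\setminus B_e$. Consequently, if $\mathcal{G}$ has no infinite emitters, the hypothesis "$\pi(s_e^* )(h)=0$ for each edge $e$ and each $h\in B\setminus B_e$" is implied by the hypothesis "$\pi(p_A)(h)=0$ for each $A\in\mathcal{G}^0$ and $h\in B\setminus B_A$".
   Context: Let $\mathcal{G}=(G^0,\mathcal{G}^1,r,s)$ be an ultragraph (sets $G^0$ of vertices and $\mathcal{G}^1$ of edges, $s:\mathcal{G}^1\to G^0$, $r:\mathcal{G}^1\to P(G^0)\setminus\{\emptyset\}$), and let $\mathcal{G}^0$ be the smallest subset of $P(G^0)$ containing all singletons $\{v\}$, all $r(e)$, and closed under finite unions and intersections. Let $R$ be a unital commutative ring and $L_R(\mathcal{G})$ the ultragraph Leavitt path algebra, generated by $\{s_e,s_e^*:e\in\mathcal{G}^1\}\cup\{p_A:A\in\mathcal{G}^0\}$ with relations $p_\emptyset=0$, $p_Ap_B=p_{A\cap B}$, $p_{A\cup B}=p_A+p_B-p_{A\cap B}$; $p_{s(e)}s_e=s_ep_{r(e)}=s_e$, $p_{r(e)}s_e^*=s_e^*p_{s(e)}=s_e^*$; $s_e^*s_f=\delta_{e,f}p_{r(e)}$; and $p_v=\sum_{s(e)=v}s_es_e^*$ whenever $0<|s^{-1}(v)|<\infty$. Let $N$ be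 an $R$-module and $\pi:L_R(\mathcal{G})\to Hom_R(N)$ an $R$-algebra homomorphism. Set $N_e=\pi(s_es_e^* )(N)$ for $e\in\mathcal{G}^1$ and $N_A=\pi(p_A)(N)$ for $A\in\mathcal{G}^0$. Suppose $\pi$ is permutative, i.e. there are bases $B$ of $N$, $B_v$ of $N_v$, $B_{r(e)}$ of $N_{r(e)}$ and $B_e$ of $N_e$ ($v\in G^0$, $e\in\mathcal{G}^1$) with $B_v\subseteq B$, $B_{r(e)}\subseteq B$, $B_v\subseteq B_{r(e)}$ for $v\in r(e)$, $B_e\subseteq B_{s(e)}$, and $\pi(s_e)(B_{r(e)})=B_e$. For $A\in\mathcal{G}^0$ written as $A=\big(\bigcap_{e\in X_1}r(e)\big)\cup\dots\cup\big(\bigcap_{e\in X_n}r(e)\big)\cup F$ with $X_i\subseteq\mathcal{G}^1$ and $F\subseteq G^0$ finite, set $B_A=\big(\bigcap_{e\in X_1}B_{r(e)}\big)\cup\dots\cup\big(\bigcap_{e\in X_n}B_{r(e)}\big)\cup\bigcup_{v\in F}B_v$; this is well defined and is a basis of $N_A$. *)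

theory Defs
  imports Complex_Main
begin

text \<open>An ultragraph is given by s :: 'e => 'v and r :: 'e => 'v set with r e nonempty.\<close>

inductive_set G0 :: "('e \<Rightarrow> 'v set) \<Rightarrow> 'v set set" for r :: "'e \<Rightarrow> 'v set" where
  sing: "{v} \<in> G0 r"
| rng: "r e \<in> G0 r"
| un: "A \<in> G0 r \<Longrightarrow> B \<in> G0 r \<Longrightarrow> A \<union> B \<in> G0 r"
| int: "A \<in> G0 r \<Longrightarrow> B \<in> G0 r \<Longrightarrow> A \<inter> B \<in> G0 r"

text \<open>An R-algebra homomorphism pi from L_R(G) into Hom_R(N) is the same thing as a family of
  R-linear endomorphisms of N (images of the generators p_A, s_e, s_e^* ) satisfying the
  defining relations of L_R(G) (universal property). P A = pi(p_A), S e = pi(s_e),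
  Ss e = pi(s_e^* ).\<close>

definition ulpa_rep ::
  "('r::comm_ring_1 \<Rightarrow> 'n::ab_group_add \<Rightarrow> 'n) \<Rightarrow> ('e \<Rightarrow> 'v) \<Rightarrow> ('e \<Rightarrow> 'v set)
   \<Rightarrow> ('v set \<Rightarrow> 'n \<Rightarrow> 'n) \<Rightarrow> ('e \<Rightarrow> 'n \<Rightarrow> 'n) \<Rightarrow> ('e \<Rightarrow> 'n \<Rightarrow> 'n) \<Rightarrow> bool" where
  "ulpa_rep sc s r P S Ss \<longleftrightarrow>
     (\<forall>A\<in>G0 r. module_hom sc sc (P A)) \<and>
     (\<forall>e. module_hom sc sc (S e) \<and> module_hom sc sc (Ss e)) \<and>
     P {} = (\<lambda>_. 0) \<and>
     (\<forall>A\<in>G0 r. \<forall>B\<in>G0 r. P A \<circ> P B = P (A \<inter> B)) \<and>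
     (\<forall>A\<in>G0 r. \<forall>B\<in>G0 r. P (A \<union> B) = (\<lambda>x. P A x + P B x - P (A \<inter> B) x)) \<and>
     (\<forall>e. P {s e} \<circ> S e = S e \<and> S e \<circ> P (r e) = S e \<and>
          P (r e) \<circ> Ss e = Ss e \<and> Ss e \<circ> P {s e} = Ss e) \<and>
     (\<forall>e f. Ss e \<circ> S f = (if e = f then P (r e) else (\<lambda>_. 0))) \<and>
     (\<forall>v. s -` {v} \<noteq> {} \<and> finite (s -` {v}) \<longrightarrow>
          P {v} = (\<lambda>x. \<Sum>e\<in>s -` {v}. S e (Ss e x)))"

definition is_basis_of :: "('r::comm_ring_1 \<Rightarrow> 'n::ab_group_add \<Rightarrow> 'n) \<Rightarrow> 'n set \<Rightarrow> 'n set \<Rightarrow> bool" where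
  "is_basis_of sc X M \<longleftrightarrow> \<not> module.dependent sc X \<and> module.span sc X = M"

text \<open>N_v = range (P {v}), N_{r(e)} = range (P (r e)), N_e = range (S e o Ss e).\<close>

definition permutative ::
  "('r::comm_ring_1 \<Rightarrow> 'n::ab_group_add \<Rightarrow> 'n) \<Rightarrow> ('e \<Rightarrow> 'v) \<Rightarrow> ('e \<Rightarrow> 'v set)
   \<Rightarrow> ('v set \<Rightarrow> 'n \<Rightarrow> 'n) \<Rightarrow> ('e \<Rightarrow> 'n \<Rightarrow> 'n) \<Rightarrow> ('e \<Rightarrow> 'n \<Rightarrow> 'n)
   \<Rightarrow> 'n set \<Rightarrow> ('v \<Rightarrow> 'n set) \<Rightarrow> ('e \<Rightarrow> 'n set) \<Rightarrow> ('e \<Rightarrow> 'n set) \<Rightarrow> bool" where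
  "permutative sc s r P S Ss B Bv Br Be \<longleftrightarrow>
     is_basis_of sc B UNIV \<and>
     (\<forall>v. is_basis_of sc (Bv v) (range (P {v})) \<and> Bv v \<subseteq> B) \<and>
     (\<forall>e. is_basis_of sc (Br e) (range (P (r e))) \<and> Br e \<subseteq> B) \<and>
     (\<forall>e. \<forall>v\<in>r e. Bv v \<subseteq> Br e) \<and>
     (\<forall>e. is_basis_of sc (Be e) (range (\<lambda>x. S e (Ss e x))) \<and> Be e \<subseteq> Bv (s e)) \<and>
     (\<forall>e. S e ` Br e = Be e)"

text \<open>BA_rep r Bv Br A X: X is the set B_A computed from some representation
  A = (Inter_{e in X_1} r e) Un ... Un (Inter_{e in X_n} r e) Un F
  (X_i finite nonempty sets of edges, F finite set of vertices) as
  X = (Inter_{e in X_1} B_{r(e)}) Un ... Un (Inter_{e in X_n} B_{r(e)}) Un Union_{v in F} B_v.\<close>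

definition BA_rep :: "('e \<Rightarrow> 'v set) \<Rightarrow> ('v \<Rightarrow> 'n set) \<Rightarrow> ('e \<Rightarrow> 'n set) \<Rightarrow> 'v set \<Rightarrow> 'n set \<Rightarrow> bool" where
  "BA_rep r Bv Br A X \<longleftrightarrow>
     (\<exists>(n::nat) Xs F. finite F \<and> (\<forall>i<n. finite (Xs i) \<and> Xs i \<noteq> {}) \<and>
        A = (\<Union>i<n. \<Inter>e\<in>Xs i. r e) \<union> F \<and>
        X = (\<Union>i<n. \<Inter>e\<in>Xs i. Br e) \<union> (\<Union>v\<in>F. Bv v))"

end

theory Submission imports Defs begin
lemma ulpaD:
  assumes "ulpa_rep sc s r P S Ss"
  shows "module_hom sc sc (Ss e)"
    and "Ss e \<circ> P {s e} = Ss e"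
    and "A \<in> G0 r \<Longrightarrow> B' \<in> G0 r \<Longrightarrow> P A \<circ> P B' = P (A \<inter> B')"
    and "s -` {v} \<noteq> {} \<Longrightarrow> finite (s -` {v}) \<Longrightarrow> P {v} = (\<lambda>x. \<Sum>e\<in>s -` {v}. S e (Ss e x))"
    and "Ss e \<circ> S f = (if e = f then P (r e) else (\<lambda>_. 0))"
proof -
  note U = assms[unfolded ulpa_rep_def]
  have 1: "\<forall>e. module_hom sc sc (S e) \<and> module_hom sc sc (Ss e)" using U by (elim conjE) assumption
  have 2: "\<forall>A\<in>G0 r. \<forall>B\<in>G0 r. P A \<circ> P B = P (A \<inter> B)" using U by (elim conjE) assumption
  have 3: "\<forall>e. P {s e} \<circ> S e = S e \<and> S e \<circ> P (r e) = S e \<and>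
          P (r e) \<circ> Ss e = Ss e \<and> Ss e \<circ> P {s e} = Ss e" using U by (elim conjE) assumption
  have 4: "\<forall>e f. Ss e \<circ> S f = (if e = f then P (r e) else (\<lambda>_. 0))" using U by (elim conjE) assumption
  have 5: "\<forall>v. s -` {v} \<noteq> {} \<and> finite (s -` {v}) \<longrightarrow>
          P {v} = (\<lambda>x. \<Sum>e\<in>s -` {v}. S e (Ss e x))" using U by (elim conjE) assumption
  show "module_hom sc sc (Ss e)" using 1 by blast
  show "Ss e \<circ> P {s e} = Ss e" using 3 by blast
  show "A \<in> G0 r \<Longrightarrow> B' \<in> G0 r \<Longrightarrow> P A \<circ> P B' = P (A \<inter> B')" using 2 by blast
  show "s -` {v} \<noteq> {} \<Longrightarrow> finite (s -` {v}) \<Longrightarrow> P {v} = (\<lambda>x. \<Sum>e\<in>s -` {v}. S e (Ss e x))" using 5 by blast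
  show "Ss e \<circ> S f = (if e = f then P (r e) else (\<lambda>_. 0))" using 4 by blast
qed

lemma permD:
  assumes "permutative sc s r P S Ss B Bv Br Be"
  shows "is_basis_of sc B UNIV"
    and "is_basis_of sc (Bv v) (range (P {v}))" "Bv v \<subseteq> B"
    and "is_basis_of sc (Be e) (range (\<lambda>x. S e (Ss e x)))" "Be e \<subseteq> Bv (s e)"
proof -
  note U = assms[unfolded permutative_def]
  have 1: "is_basis_of sc B UNIV" using U by (elim conjE) assumption
  have 2: "\<forall>v. is_basis_of sc (Bv v) (range (P {v})) \<and> Bv v \<subseteq> B" using U by (elim conjE) assumption
  have 3: "\<forall>e. is_basis_of sc (Be e) (range (\<lambda>x. S e (Ss e x))) \<and> Be e \<subseteq> Bv (s e)" using U by (elim conjE) assumption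
  show "is_basis_of sc B UNIV" by (rule 1)
  show "is_basis_of sc (Bv v) (range (P {v}))" "Bv v \<subseteq> B" using 2 by blast+
  show "is_basis_of sc (Be e) (range (\<lambda>x. S e (Ss e x)))" "Be e \<subseteq> Bv (s e)" using 3 by blast+
qed
lemma (in module) dep_if_in_span_delete:
  assumes "a \<in> X" "a \<in> span (X - {a})" "(1::'a) \<noteq> 0"
  shows "dependent X"
proof -
  from assms(2) obtain t u where t: "finite t" "t \<subseteq> X - {a}" "a = (\<Sum>v\<in>t. u v *s v)"
    unfolding span_explicit by blast
  define u' where "u' = u(a := -1)"
  have "(\<Sum>v\<in>insert a t. u' v *s v) = u' a *s a + (\<Sum>v\<in>t. u' v *s v)"
    using t by (subst sum.insert) auto
  also have "(\<Sum>v\<in>t. u' v *s v) = (\<Sum>v\<in>t. u v *s v)"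
    using t by (intro sum.cong) (auto simp: u'_def)
  also have "u' a *s a = - a" by (simp add: u'_def scale_minus_left)
  finally have "(\<Sum>v\<in>insert a t. u' v *s v) = 0" using t by simp
  then show ?thesis unfolding dependent_explicit using t assms
    by (intro exI[of _ "insert a t"] exI[of _ u']) (auto simp: u'_def)
qed

lemma core:
  fixes sc :: "'r::comm_ring_1 \<Rightarrow> 'n::ab_group_add \<Rightarrow> 'n"
    and s :: "'e \<Rightarrow> 'v" and r :: "'e \<Rightarrow> 'v set"
    and P :: "'v set \<Rightarrow> 'n \<Rightarrow> 'n" and S Ss :: "'e \<Rightarrow> 'n \<Rightarrow> 'n"
    and B :: "'n set" and Bv :: "'v \<Rightarrow> 'n set" and Br Be :: "'e \<Rightarrow> 'n set"
    and e :: 'e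
  assumes M: "module sc"
    and U: "ulpa_rep sc s r P S Ss"
    and Pm: "permutative sc s r P S Ss B Bv Br Be"
    and hyp: "\<forall>A\<in>G0 r. \<forall>X. BA_rep r Bv Br A X \<longrightarrow> (\<forall>h\<in>B - X. P A h = 0)"
    and ne: "s -` {s e} \<noteq> {}" and fin: "finite (s -` {s e})"
    and hB: "h \<in> B" and hBe: "h \<notin> Be e"
  shows "Ss e h = 0"
proof (cases "(1::'r) = 0")
  case True
  have "Ss e h = sc 1 (Ss e h)" using M by (simp add: module.scale_one)
  also have "\<dots> = sc 0 (Ss e h)" using True by simp
  also have "\<dots> = 0" using M by (simp add: module.scale_zero_left)
  finally show ?thesis .
next
  case one: False
  define v where "v = s e"
  have hom: "module_hom sc sc (Ss e)" by (rule ulpaD(1)[OF U])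
  have SsP: "Ss e \<circ> P {v} = Ss e" unfolding v_def by (rule ulpaD(2)[OF U])
  have sing: "{v} \<in> G0 r" by (rule G0.sing)
  show ?thesis
  proof (cases "h \<in> Bv v")
    case False
    have "BA_rep r Bv Br {v} (Bv v)" unfolding BA_rep_def
      by (rule exI[of _ 0]) auto
    with hyp sing hB False have "P {v} h = 0" by blast
    then have "Ss e h = Ss e 0" using SsP by (metis comp_apply)
    also have "\<dots> = 0" using hom by (simp add: module_hom.zero)
    finally show ?thesis .
  next
    case True
    have bv: "is_basis_of sc (Bv v) (range (P {v}))" by (rule permD(2)[OF Pm])
    then have "h \<in> range (P {v})" using True M unfolding is_basis_of_def
      by (metis module.span_base)
    then obtain y where y: "h = P {v} y" by blast
    have idem: "P {v} \<circ> P {v} = P {v}" using ulpaD(3)[OF U sing sing] by simp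
    have hP: "P {v} h = h" using y idem by (metis comp_apply)
    have sum: "P {v} = (\<lambda>x. \<Sum>g\<in>s -` {v}. S g (Ss g x))"
      using ulpaD(4)[OF U] ne fin unfolding v_def by blast
    have hsum: "h = (\<Sum>g\<in>s -` {v}. S g (Ss g h))" using hP sum by metis
    have indep: "\<not> module.dependent sc B" using permD(1)[OF Pm] unfolding is_basis_of_def by blast
    have "\<exists>g\<in>s -` {v}. h \<in> Be g"
    proof (rule ccontr)
      assume nh: "\<not> ?thesis"
      have "S g (Ss g h) \<in> module.span sc (B - {h})" if g: "g \<in> s -` {v}" for g
      proof -
        have be: "is_basis_of sc (Be g) (range (\<lambda>x. S g (Ss g x)))" "Be g \<subseteq> Bv (s g)"
          "Bv (s g) \<subseteq> B"
          using permD[OF Pm] by blast+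
        have "S g (Ss g h) \<in> module.span sc (Be g)" using be(1) unfolding is_basis_of_def by auto
        moreover have "Be g \<subseteq> B - {h}" using be nh g by blast
        ultimately show ?thesis using module.span_mono[OF M] by blast
      qed
      then have "(\<Sum>g\<in>s -` {v}. S g (Ss g h)) \<in> module.span sc (B - {h})"
        by (rule module.span_sum[OF M])
      then have "h \<in> module.span sc (B - {h})" using hsum by simp
      then have "module.dependent sc B" using module.dep_if_in_span_delete[OF M hB _ one] by blast
      with indep show False by blast
    qed
    then obtain g where g: "s g = v" "h \<in> Be g" by blast
    have ge: "g \<noteq> e" using g hBe by blast
    have "is_basis_of sc (Be g) (range (\<lambda>x. S g (Ss g x)))" by (rule permD(4)[OF Pm])
    then have "h \<in> range (\<lambda>x. S g (Ss g x))" using g M unfolding is_basis_of_def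
      by (metis module.span_base)
    then obtain x where x: "h = S g (Ss g x)" by blast
    have "Ss e \<circ> S g = (\<lambda>_. 0)" using ulpaD(5)[OF U, of e g] ge by simp
    then show ?thesis using x by (metis comp_apply)
  qed
qed

theorem mainTheorem9:
  fixes sc :: "'r::comm_ring_1 \<Rightarrow> 'n::ab_group_add \<Rightarrow> 'n"
    and s :: "'e \<Rightarrow> 'v" and r :: "'e \<Rightarrow> 'v set"
    and P :: "'v set \<Rightarrow> 'n \<Rightarrow> 'n" and S Ss :: "'e \<Rightarrow> 'n \<Rightarrow> 'n"
    and B :: "'n set" and Bv :: "'v \<Rightarrow> 'n set" and Br Be :: "'e \<Rightarrow> 'n set"
    and e :: 'e
  assumes "module sc"
    and "\<forall>f. r f \<noteq> {}"
    and "ulpa_rep sc s r P S Ss"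
    and "permutative sc s r P S Ss B Bv Br Be"
    and hyp: "\<forall>A\<in>G0 r. \<forall>X. BA_rep r Bv Br A X \<longrightarrow> (\<forall>h\<in>B - X. P A h = 0)"
  shows "(s -` {s e} \<noteq> {} \<and> finite (s -` {s e}) \<longrightarrow> (\<forall>h\<in>B - Be e. Ss e h = 0))
       \<and> ((\<forall>v. finite (s -` {v})) \<longrightarrow> (\<forall>f. \<forall>h\<in>B - Be f. Ss f h = 0))"
proof (intro conjI impI allI ballI)
  fix h assume "s -` {s e} \<noteq> {} \<and> finite (s -` {s e})" "h \<in> B - Be e"
  then show "Ss e h = 0" using core[OF assms(1,3,4) hyp] by blast
next
  fix f h assume "\<forall>v. finite (s -` {v})" "h \<in> B - Be f"
  moreover have "s -` {s f} \<noteq> {}" by blast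
  ultimately show "Ss f h = 0" using core[OF assms(1,3,4) hyp] by blast
qed

end
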